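(* Let $T$ be a rank-one transformation given by a cutting and stacking construction and let $I$ be the level of $C_0$. Then for all sets $A,B\subseteq I$ which are finite unions of levels (of columns $C_j$), $$\frac{1}{a_n(I)}\sum_{k=0}^{n-1}\mu(A\cap T^kB)\longrightarrow \mu(A)\mu(B)\quad (n\to\infty).$$
   Context: $(X,\mathcal B,\mu)$ is a standard Borel space with a nonatomic $\sigma$-finite measure. A rank-one transformation given by cutting and stacking: $C_0$ consists of a single level $I$ of positive finite measure; column $C_n$ has height $h_n$, levels of measure $w_n$; it is cut into $r_n\ge 2$ subcolumns of equal width, $s_{n,k}\ge 0$ spacers are placed above the $k$-th subcolumn, and the subcolumns are stacked left to right to form $C_{n+1}$; $T$ maps each level to the one directly above it. For a set $F$ of positive finite measure, $u_k(F)=\mu(F\cap T^kF)/\mu(F)^2$ and $a_n(F)=\sum_{k=0}^{n-1}u_k(F)$. *)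

theory Defs
  imports "HOL-Analysis.Analysis"
begin

text \<open>Standard Borel space: measurably isomorphic to a Borel subset of the reals
  (Kuratowski: every standard Borel space is).\<close>
definition standard_borel :: "'a measure \<Rightarrow> bool" where
  "standard_borel M \<longleftrightarrow>
     (\<exists>S f g. S \<in> sets (borel :: real measure) \<and>
        f \<in> measurable M (restrict_space borel S) \<and>
        g \<in> measurable (restrict_space borel S) M \<and>
        (\<forall>x\<in>space M. g (f x) = x) \<and> (\<forall>y\<in>S. f (g y) = y))"

definition nonatomic_measure :: "'a measure \<Rightarrow> bool" where
  "nonatomic_measure M \<longleftrightarrow>
     (\<forall>A\<in>sets M. emeasure M A > 0 \<longrightarrow>
        (\<exists>B\<in>sets M. B \<subseteq> A \<and> 0 < emeasure M B \<and> emeasure M B < emeasure M A))"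

fun col_height :: "(nat \<Rightarrow> nat) \<Rightarrow> (nat \<Rightarrow> nat \<Rightarrow> nat) \<Rightarrow> nat \<Rightarrow> nat" where
  "col_height r s 0 = 1"
| "col_height r s (Suc n) = r n * col_height r s n + (\<Sum>k<r n. s n k)"

text \<open>Index (in column \<open>C (n+1)\<close>) of the bottom level of the \<open>k\<close>-th subcolumn of \<open>C n\<close>.\<close>
definition sub_pos :: "(nat \<Rightarrow> nat) \<Rightarrow> (nat \<Rightarrow> nat \<Rightarrow> nat) \<Rightarrow> nat \<Rightarrow> nat \<Rightarrow> nat" where
  "sub_pos r s n k = k * col_height r s n + (\<Sum>i<k. s n i)"

text \<open>\<open>L n j\<close> is the \<open>j\<close>-th level (from the bottom, \<open>j < h n\<close>) of column \<open>C n\<close>;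
  \<open>T\<close> is an invertible measure preserving map realising the cutting and stacking
  construction with cut numbers \<open>r n\<close> and spacer numbers \<open>s n k\<close>.\<close>
definition cutting_stacking ::
  "'a measure \<Rightarrow> ('a \<Rightarrow> 'a) \<Rightarrow> (nat \<Rightarrow> nat) \<Rightarrow> (nat \<Rightarrow> nat \<Rightarrow> nat) \<Rightarrow> (nat \<Rightarrow> nat \<Rightarrow> 'a set) \<Rightarrow> bool" where
  "cutting_stacking M T r s L \<longleftrightarrow>
     (\<forall>n. 2 \<le> r n) \<and>
     0 < emeasure M (L 0 0) \<and> emeasure M (L 0 0) < \<infinity> \<and>
     (\<forall>n j. j < col_height r s n \<longrightarrow> L n j \<in> sets M) \<and>
     (\<forall>n j. j < col_height r s n \<longrightarrow>
        emeasure M (L n j) = emeasure M (L 0 0) / ennreal (real (\<Prod>i<n. r i))) \<and>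
     (\<forall>n i j. i < col_height r s n \<longrightarrow> j < col_height r s n \<longrightarrow> i \<noteq> j \<longrightarrow>
        L n i \<inter> L n j = {}) \<and>
     (\<forall>n j. j < col_height r s n \<longrightarrow>
        L n j = (\<Union>k<r n. L (Suc n) (sub_pos r s n k + j))) \<and>
     (\<forall>n j. Suc j < col_height r s n \<longrightarrow> T ` L n j = L n (Suc j)) \<and>
     bij_betw T (space M) (space M) \<and>
     T \<in> measurable M M \<and> the_inv_into (space M) T \<in> measurable M M \<and>
     (\<forall>A\<in>sets M. emeasure M (T -` A \<inter> space M) = emeasure M A)"

definition finite_union_of_levels ::
  "(nat \<Rightarrow> nat) \<Rightarrow> (nat \<Rightarrow> nat \<Rightarrow> 'a set) \<Rightarrow> 'a set \<Rightarrow> bool" where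
  "finite_union_of_levels ht L A \<longleftrightarrow>
     (\<exists>F :: (nat \<times> nat) set. finite F \<and> (\<forall>p\<in>F. snd p < ht (fst p)) \<and> A = (\<Union>p\<in>F. L (fst p) (snd p)))"

definition u_seq :: "'a measure \<Rightarrow> ('a \<Rightarrow> 'a) \<Rightarrow> 'a set \<Rightarrow> nat \<Rightarrow> real" where
  "u_seq M T F k = measure M (F \<inter> (T ^^ k) ` F) / (measure M F)\<^sup>2"

definition a_seq :: "'a measure \<Rightarrow> ('a \<Rightarrow> 'a) \<Rightarrow> 'a set \<Rightarrow> nat \<Rightarrow> real" where
  "a_seq M T F n = (\<Sum>k<n. u_seq M T F k)"

end

theory Submission
  imports Defs
begin

locale CS =
  fixes M :: "'a measure" and T :: "'a \<Rightarrow> 'a" and r :: "nat \<Rightarrow> nat"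
    and s :: "nat \<Rightarrow> nat \<Rightarrow> nat" and L :: "nat \<Rightarrow> nat \<Rightarrow> 'a set"
  assumes cs: "cutting_stacking M T r s L"
begin

lemmas csd = cs[unfolded cutting_stacking_def]

abbreviation "h \<equiv> col_height r s"

lemma r2: "2 \<le> r n" using csd[THEN conjunct1] by blast
lemma L00pos: "0 < emeasure M (L 0 0)" using csd[THEN conjunct2, THEN conjunct1] by blast
lemma L00fin: "emeasure M (L 0 0) < \<infinity>" using csd[THEN conjunct2, THEN conjunct2, THEN conjunct1] by blast
lemma Lsets: "j < h n \<Longrightarrow> L n j \<in> sets M" using csd[THEN conjunct2, THEN conjunct2, THEN conjunct2, THEN conjunct1] by blast
lemma Lemeas: "j < h n \<Longrightarrow> emeasure M (L n j) = emeasure M (L 0 0) / ennreal (real (\<Prod>i<n. r i))"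
  using csd[THEN conjunct2, THEN conjunct2, THEN conjunct2, THEN conjunct2, THEN conjunct1] by blast
lemma Ldisj: "i < h n \<Longrightarrow> j < h n \<Longrightarrow> i \<noteq> j \<Longrightarrow> L n i \<inter> L n j = {}"
  using csd[THEN conjunct2, THEN conjunct2, THEN conjunct2, THEN conjunct2, THEN conjunct2, THEN conjunct1] by blast
lemma Lref: "j < h n \<Longrightarrow> L n j = (\<Union>k<r n. L (Suc n) (sub_pos r s n k + j))"
  using csd[THEN conjunct2, THEN conjunct2, THEN conjunct2, THEN conjunct2, THEN conjunct2, THEN conjunct2, THEN conjunct1] by blast
lemma Tstep: "Suc j < h n \<Longrightarrow> T ` L n j = L n (Suc j)"
  using csd[THEN conjunct2, THEN conjunct2, THEN conjunct2, THEN conjunct2, THEN conjunct2, THEN conjunct2, THEN conjunct2, THEN conjunct1] by blast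
lemma Tbij: "bij_betw T (space M) (space M)" using csd[THEN conjunct2, THEN conjunct2, THEN conjunct2, THEN conjunct2, THEN conjunct2, THEN conjunct2, THEN conjunct2, THEN conjunct2, THEN conjunct1] by blast
lemma Tinvm: "the_inv_into (space M) T \<in> measurable M M" using csd[THEN conjunct2, THEN conjunct2, THEN conjunct2, THEN conjunct2, THEN conjunct2, THEN conjunct2, THEN conjunct2, THEN conjunct2, THEN conjunct2, THEN conjunct2, THEN conjunct1] by blast
lemma Tpres: "A \<in> sets M \<Longrightarrow> emeasure M (T -` A \<inter> space M) = emeasure M A"
  using csd[THEN conjunct2, THEN conjunct2, THEN conjunct2, THEN conjunct2, THEN conjunct2, THEN conjunct2, THEN conjunct2, THEN conjunct2, THEN conjunct2, THEN conjunct2, THEN conjunct2] by blast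

definition "\<mu>I = measure M (L 0 0)"
definition "w n = \<mu>I / real (\<Prod>i<n. r i)"

lemma muI_pos: "0 < \<mu>I"
  using L00pos L00fin unfolding \<mu>I_def by (simp add: measure_def enn2real_positive_iff)

lemma r_pos: "0 < r i" by (rule less_le_trans[OF _ r2]) simp

lemma prod_pos: "0 < real (\<Prod>i<n. r i)"
  using r_pos by (simp add: prod_pos)

lemma emeas_L00: "emeasure M (L 0 0) = ennreal \<mu>I"
  using L00fin unfolding \<mu>I_def by (simp add: emeasure_eq_ennreal_measure)

lemma Lemeas': "j < h n \<Longrightarrow> emeasure M (L n j) = ennreal (w n)"
  using Lemeas emeas_L00 prod_pos muI_pos unfolding w_def by (simp add: divide_ennreal)

lemma Lmeasure: "j < h n \<Longrightarrow> measure M (L n j) = w n"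
  using Lemeas' muI_pos prod_pos unfolding w_def by (simp add: measure_def)

lemma w_pos: "0 < w n" unfolding w_def using muI_pos prod_pos by simp

lemma h_pos: "0 < h n"
proof (induction n)
  case 0 then show ?case by simp
next
  case (Suc n) then show ?case using r2[of n] by simp
qed

lemma Lspace: "j < h n \<Longrightarrow> L n j \<subseteq> space M" using Lsets sets.sets_into_space by blast

lemma img_eq: "X \<subseteq> space M \<Longrightarrow> T ` X = the_inv_into (space M) T -` X \<inter> space M"
proof -
  assume X: "X \<subseteq> space M"
  have inj: "inj_on T (space M)" and su: "T ` space M = space M" using Tbij unfolding bij_betw_def by auto
  show ?thesis
  proof (rule set_eqI, rule iffI)
    fix y assume "y \<in> T ` X"
    then obtain x where x: "x \<in> X" "y = T x" by blast
    then show "y \<in> the_inv_into (space M) T -` X \<inter> space M"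
      using the_inv_into_f_f[OF inj] X su by auto
  next
    fix y assume y: "y \<in> the_inv_into (space M) T -` X \<inter> space M"
    then have "y = T (the_inv_into (space M) T y)" using f_the_inv_into_f[OF inj] su by auto
    then show "y \<in> T ` X" using y by blast
  qed
qed

lemma img_sets: "X \<in> sets M \<Longrightarrow> T ` X \<in> sets M"
proof -
  assume X: "X \<in> sets M"
  have "T ` X = the_inv_into (space M) T -` X \<inter> space M" by (rule img_eq[OF sets.sets_into_space[OF X]])
  then show ?thesis using measurable_sets[OF Tinvm X] by simp
qed

lemma img_emeas: "X \<in> sets M \<Longrightarrow> emeasure M (T ` X) = emeasure M X"
proof -
  assume X: "X \<in> sets M"
  have inj: "inj_on T (space M)" and su: "T ` space M = space M" using Tbij unfolding bij_betw_def by auto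
  have "T -` (T ` X) \<inter> space M = X" using inj sets.sets_into_space[OF X]
    by (auto simp: inj_on_def) 
  then show ?thesis using Tpres[OF img_sets[OF X]] by simp
qed

lemma funpow_img: "(T ^^ Suc k) ` X = T ` ((T ^^ k) ` X)" by (simp add: image_image)

lemma Tk_sets: "X \<in> sets M \<Longrightarrow> (T ^^ k) ` X \<in> sets M"
  proof (induction k)
  case (Suc k) then show ?case unfolding funpow_img by (simp add: img_sets)
qed simp

lemma Tk_emeas: "X \<in> sets M \<Longrightarrow> emeasure M ((T ^^ k) ` X) = emeasure M X"
  proof (induction k)
  case (Suc k) then show ?case unfolding funpow_img by (simp add: img_emeas Tk_sets)
qed simp

lemma Tk_measure: "X \<in> sets M \<Longrightarrow> measure M ((T ^^ k) ` X) = measure M X"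
  using Tk_emeas by (simp add: measure_def)

lemma Tk_inj: "inj_on (T ^^ k) (space M)"
  using bij_betw_funpow[OF Tbij] bij_betw_def by blast

lemma Tk_level: "i + j < h n \<Longrightarrow> (T ^^ j) ` L n i = L n (i + j)"
proof (induction j)
  case 0 then show ?case by simp
next
  case (Suc j)
  then have "(T ^^ Suc j) ` L n i = T ` L n (i + j)" by (simp only: funpow_img)
  also have "\<dots> = L n (i + Suc j)" using Suc.prems Tstep[of "i+j" n] by simp
  finally show ?case .
qed


lemma sub_pos_bound: "k < r n \<Longrightarrow> q < h n \<Longrightarrow> sub_pos r s n k + q < h (Suc n)"
proof -
  assume k: "k < r n" and q: "q < h n"
  have "Suc k * h n \<le> r n * h n" using k by (intro mult_le_mono1) simp
  moreover have "(\<Sum>i<k. s n i) \<le> (\<Sum>i<r n. s n i)" using k by (intro sum_mono2) auto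
  ultimately show ?thesis using q unfolding sub_pos_def by simp
qed

lemma refine: "j \<le> m \<Longrightarrow> i < h j \<Longrightarrow> \<exists>Q \<subseteq> {..<h m}. L j i = (\<Union>q\<in>Q. L m q)"
proof (induction m rule: dec_induct)
  case base then show ?case by (intro exI[of _ "{i}"]) auto
next
  case (step m)
  then obtain Q where Q: "Q \<subseteq> {..<h m}" "L j i = (\<Union>q\<in>Q. L m q)" by blast
  define Q' where "Q' = (\<lambda>(k,q). sub_pos r s m k + q) ` ({..<r m} \<times> Q)"
  have "Q' \<subseteq> {..<h (Suc m)}" using Q(1) sub_pos_bound unfolding Q'_def by auto
  moreover have "L j i = (\<Union>q\<in>Q'. L (Suc m) q)"
  proof -
    have "L j i = (\<Union>q\<in>Q. \<Union>k<r m. L (Suc m) (sub_pos r s m k + q))"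
      unfolding Q(2) using Q(1) by (intro SUP_cong refl Lref) auto
    also have "\<dots> = (\<Union>q\<in>Q'. L (Suc m) q)" unfolding Q'_def by auto
    finally show ?thesis .
  qed
  ultimately show ?case by blast
qed

lemma union_refine:
  assumes "finite F" "\<forall>p\<in>F. snd p < h (fst p) \<and> fst p \<le> m"
  shows "\<exists>Q \<subseteq> {..<h m}. (\<Union>p\<in>F. L (fst p) (snd p)) = (\<Union>q\<in>Q. L m q)"
proof -
  have "\<forall>p\<in>F. \<exists>Q. Q \<subseteq> {..<h m} \<and> L (fst p) (snd p) = (\<Union>q\<in>Q. L m q)"
    using assms(2) refine by blast
  then obtain Qf where Qf: "\<forall>p\<in>F. Qf p \<subseteq> {..<h m} \<and> L (fst p) (snd p) = (\<Union>q\<in>Qf p. L m q)"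
    by metis
  show ?thesis using Qf by (intro exI[of _ "\<Union>(Qf ` F)"]) auto
qed

definition "U m Q = (\<Union>q\<in>Q. L m q)"

lemma U_sets: "Q \<subseteq> {..<h m} \<Longrightarrow> U m Q \<in> sets M"
  unfolding U_def using Lsets finite_subset[of Q "{..<h m}"]
  by (intro sets.finite_UN) auto

lemma disj_L: "disjoint_family_on (L m) {..<h m}"
  unfolding disjoint_family_on_def using Ldisj by blast

lemma U_measure: "Q \<subseteq> {..<h m} \<Longrightarrow> measure M (U m Q) = real (card Q) * w m"
proof -
  assume Q: "Q \<subseteq> {..<h m}"
  then have "finite Q" using finite_subset by blast
  have "measure M (U m Q) = (\<Sum>q\<in>Q. measure M (L m q))"
    unfolding U_def using Q Lsets Lemeas' disjoint_family_on_mono[OF Q disj_L] \<open>finite Q\<close>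
    by (intro measure_finite_Union) auto
  also have "\<dots> = (\<Sum>q\<in>Q. w m)" using Q Lmeasure by (intro sum.cong) auto
  finally show ?thesis by simp
qed

definition "f m a b k = measure M (L m a \<inter> (T ^^ k) ` L m b)"
definition "c m j = measure M (L m 0 \<inter> (T ^^ j) ` L m 0)"

lemma Tk_space: "X \<in> sets M \<Longrightarrow> (T ^^ k) ` X \<subseteq> space M"
  using Tk_sets sets.sets_into_space by blast

lemma f_c: assumes "a < h m" "b < h m" "a \<le> k + b" shows "f m a b k = c m (k + b - a)"
proof -
  have L0: "L m 0 \<in> sets M" using Lsets h_pos by blast
  have 1: "L m a = (T ^^ a) ` L m 0" using Tk_level[of 0 a m] assms by simp
  have "(T ^^ k) ` L m b = (T ^^ k) ` (T ^^ b) ` L m 0" using Tk_level[of 0 b m] assms by simp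
  also have "\<dots> = (T ^^ (k + b)) ` L m 0" by (simp add: funpow_add image_comp)
  also have "\<dots> = (T ^^ (a + (k + b - a))) ` L m 0" using assms by simp
  also have "\<dots> = (T ^^ a) ` (T ^^ (k + b - a)) ` L m 0" by (simp only: funpow_add image_comp)
  finally have 2: "(T ^^ k) ` L m b = (T ^^ a) ` (T ^^ (k + b - a)) ` L m 0" .
  have "L m a \<inter> (T ^^ k) ` L m b = (T ^^ a) ` (L m 0 \<inter> (T ^^ (k + b - a)) ` L m 0)"
    unfolding 1 2 by (rule inj_on_image_Int[OF Tk_inj sets.sets_into_space[OF L0] Tk_space[OF L0], symmetric])
  then show ?thesis unfolding f_def c_def using Tk_measure L0 Tk_sets by simp
qed

lemma meas_le_level: "X \<in> sets M \<Longrightarrow> X \<subseteq> L m a \<Longrightarrow> a < h m \<Longrightarrow> measure M X \<le> w m"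
proof -
  assume X: "X \<in> sets M" "X \<subseteq> L m a" and a: "a < h m"
  have "L m a \<in> fmeasurable M" using Lsets[OF a] Lemeas'[OF a] by (intro fmeasurableI) auto
  then have "measure M X \<le> measure M (L m a)" using X by (intro measure_mono_fmeasurable) auto
  then show ?thesis using Lmeasure[OF a] by simp
qed

lemma f_bounds: "a < h m \<Longrightarrow> b < h m \<Longrightarrow> 0 \<le> f m a b k \<and> f m a b k \<le> w m"
  unfolding f_def using Lsets Tk_sets by (intro conjI meas_le_level) auto

lemma c_bounds: "0 \<le> c m k \<and> c m k \<le> w m"
  unfolding c_def using h_pos Lsets Tk_sets by (intro conjI meas_le_level) auto


lemma sum_shift: "(\<Sum>k<d+n. g k) = (\<Sum>k<d. g k) + (\<Sum>k<n. g (k+d)) " for g :: "nat \<Rightarrow> real"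
  by (induction n) (simp_all add: add.commute)

lemma sum_bnd: "(\<And>k. 0 \<le> g k \<and> g k \<le> W) \<Longrightarrow> 0 \<le> (\<Sum>k<n. g k) \<and> (\<Sum>k<n. g k) \<le> real n * W"
  for g :: "nat \<Rightarrow> real"
proof -
  assume g: "\<And>k. 0 \<le> g k \<and> g k \<le> W"
  have "(\<Sum>k<n. g k) \<le> real (card {..<n}) * W" using g by (intro sum_bounded_above) auto
  then show ?thesis using g by (simp add: sum_nonneg)
qed

lemma tail_bnd: "(\<And>k. 0 \<le> g k \<and> g k \<le> W) \<Longrightarrow>
   0 \<le> (\<Sum>k<n+d. g k) - (\<Sum>k<n. g k) \<and> (\<Sum>k<n+d. g k) - (\<Sum>k<n. g k) \<le> real d * W"
  for g :: "nat \<Rightarrow> real"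
proof -
  assume g: "\<And>k. 0 \<le> g k \<and> g k \<le> W"
  have "(\<Sum>k<n+d. g k) = (\<Sum>k<n. g k) + (\<Sum>k<d. g (k+n))" by (rule sum_shift)
  moreover have "0 \<le> (\<Sum>k<d. g (k+n)) \<and> (\<Sum>k<d. g (k+n)) \<le> real d * W"
    using g by (intro sum_bnd) auto
  ultimately show ?thesis by simp
qed

definition "S m n = (\<Sum>k<n. c m k)"

lemma pair_bound:
  assumes a: "a < h m" and b: "b < h m"
  shows "\<bar>(\<Sum>k<n. f m a b k) - S m n\<bar> \<le> real (h m) * w m"
proof (cases "a \<le> b")
  case True
  define d where "d = b - a"
  have dh: "d < h m" using b unfolding d_def by simp
  have "(\<Sum>k<n. f m a b k) = (\<Sum>k<n. c m (k + d))"
    using True a b f_c unfolding d_def by (intro sum.cong) auto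
  also have "\<dots> = (\<Sum>k<d+n. c m k) - (\<Sum>k<d. c m k)" using sum_shift[where d=d and n=n and g="c m"] by simp
  finally have e: "(\<Sum>k<n. f m a b k) = (\<Sum>k<n+d. c m k) - (\<Sum>k<d. c m k)" by (simp add: add.commute)
  have t: "0 \<le> (\<Sum>k<n+d. c m k) - S m n \<and> (\<Sum>k<n+d. c m k) - S m n \<le> real d * w m"
    unfolding S_def using c_bounds by (intro tail_bnd) auto
  have u: "0 \<le> (\<Sum>k<d. c m k) \<and> (\<Sum>k<d. c m k) \<le> real d * w m"
    using c_bounds by (intro sum_bnd) auto
  have "real d * w m \<le> real (h m) * w m" using dh w_pos[of m] by (intro mult_right_mono) auto
  then show ?thesis using e t u by linarith
next
  case False
  define d where "d = a - b"
  have dh: "d < h m" using a unfolding d_def by simp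
  have dW: "real d * w m \<le> real (h m) * w m" using dh w_pos[of m] by (intro mult_right_mono) auto
  show ?thesis
  proof (cases "n \<le> d")
    case True
    have "0 \<le> (\<Sum>k<n. f m a b k) \<and> (\<Sum>k<n. f m a b k) \<le> real n * w m"
      using f_bounds a b by (intro sum_bnd) auto
    moreover have "0 \<le> S m n \<and> S m n \<le> real n * w m"
      unfolding S_def using c_bounds by (intro sum_bnd) auto
    moreover have "real n * w m \<le> real d * w m" using True w_pos[of m] by (intro mult_right_mono) auto
    ultimately show ?thesis using dW by linarith
  next
    case nd: False
    define n' where "n' = n - d"
    have n: "n = d + n'" using nd unfolding n'_def by simp
    have "(\<Sum>k<n. f m a b k) = (\<Sum>k<d. f m a b k) + (\<Sum>k<n'. f m a b (k + d))"
      unfolding n by (rule sum_shift)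
    also have "(\<Sum>k<n'. f m a b (k + d)) = S m n'"
      unfolding S_def using False a b f_c unfolding d_def by (intro sum.cong) auto
    finally have e: "(\<Sum>k<n. f m a b k) = (\<Sum>k<d. f m a b k) + S m n'" .
    have u: "0 \<le> (\<Sum>k<d. f m a b k) \<and> (\<Sum>k<d. f m a b k) \<le> real d * w m"
      using f_bounds a b by (intro sum_bnd) auto
    have t: "0 \<le> S m (n'+d) - S m n' \<and> S m (n'+d) - S m n' \<le> real d * w m"
      unfolding S_def using c_bounds by (intro tail_bnd) auto
    have "n = n' + d" using n by simp
    then show ?thesis using e u t dW by simp linarith
  qed
qed


lemma X_formula:
  assumes Q1: "Q1 \<subseteq> {..<h m}" and Q2: "Q2 \<subseteq> {..<h m}"
  shows "measure M (U m Q1 \<inter> (T ^^ k) ` U m Q2) = (\<Sum>a\<in>Q1. \<Sum>b\<in>Q2. f m a b k)"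
proof -
  have fin: "finite (Q1 \<times> Q2)" using Q1 Q2 finite_subset by blast
  have eq: "U m Q1 \<inter> (T ^^ k) ` U m Q2 = (\<Union>p\<in>Q1 \<times> Q2. L m (fst p) \<inter> (T ^^ k) ` L m (snd p))"
  proof (rule set_eqI, rule iffI)
    fix x assume "x \<in> U m Q1 \<inter> (T ^^ k) ` U m Q2"
    then obtain a y b where "a \<in> Q1" "x \<in> L m a" "b \<in> Q2" "y \<in> L m b" "x = (T ^^ k) y"
      unfolding U_def by blast
    then show "x \<in> (\<Union>p\<in>Q1 \<times> Q2. L m (fst p) \<inter> (T ^^ k) ` L m (snd p))"
      by (intro UN_I[of "(a,b)"]) auto
  next
    fix x assume "x \<in> (\<Union>p\<in>Q1 \<times> Q2. L m (fst p) \<inter> (T ^^ k) ` L m (snd p))"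
    then obtain a b y where "a \<in> Q1" "x \<in> L m a" "b \<in> Q2" "y \<in> L m b" "x = (T ^^ k) y"
      by auto
    then show "x \<in> U m Q1 \<inter> (T ^^ k) ` U m Q2" unfolding U_def by blast
  qed
  have sets: "(\<lambda>p. L m (fst p) \<inter> (T ^^ k) ` L m (snd p)) ` (Q1 \<times> Q2) \<subseteq> sets M"
    using Q1 Q2 Lsets Tk_sets by (auto intro!: sets.Int subsetD[OF Q1] subsetD[OF Q2])
  have disj: "disjoint_family_on (\<lambda>p. L m (fst p) \<inter> (T ^^ k) ` L m (snd p)) (Q1 \<times> Q2)"
  proof (unfold disjoint_family_on_def, intro ballI impI)
    fix p p' assume p: "p \<in> Q1 \<times> Q2" and p': "p' \<in> Q1 \<times> Q2" and ne: "p \<noteq> p'"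
    show "(L m (fst p) \<inter> (T ^^ k) ` L m (snd p)) \<inter> (L m (fst p') \<inter> (T ^^ k) ` L m (snd p')) = {}"
    proof (cases "fst p = fst p'")
      case False
      then have "L m (fst p) \<inter> L m (fst p') = {}" using p p' Q1 by (intro Ldisj) auto
      then show ?thesis by blast
    next
      case True
      then have ne2: "snd p \<noteq> snd p'" using ne prod_eq_iff by blast
      have d: "L m (snd p) \<inter> L m (snd p') = {}" using p p' Q2 ne2 by (intro Ldisj) auto
      have sp: "L m (snd p) \<subseteq> space M" "L m (snd p') \<subseteq> space M" using p p' Q2 Lspace by (auto intro!: Lspace subsetD[OF Q2] simp del: lessThan_iff)
      have "(T ^^ k) ` L m (snd p) \<inter> (T ^^ k) ` L m (snd p') = (T ^^ k) ` (L m (snd p) \<inter> L m (snd p'))"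
        by (rule inj_on_image_Int[OF Tk_inj sp, symmetric])
      then show ?thesis using d by auto
    qed
  qed
  have fm: "emeasure M (L m (fst p) \<inter> (T ^^ k) ` L m (snd p)) \<noteq> \<infinity>" if "p \<in> Q1 \<times> Q2" for p
  proof -
    have "emeasure M (L m (fst p) \<inter> (T ^^ k) ` L m (snd p)) \<le> emeasure M (L m (fst p))"
      using that Q1 Lsets by (intro emeasure_mono) auto
    then show ?thesis using Lemeas'[of "fst p" m] that Q1 by (auto simp: top_unique)
  qed
  have "measure M (U m Q1 \<inter> (T ^^ k) ` U m Q2) = (\<Sum>p\<in>Q1 \<times> Q2. f m (fst p) (snd p) k)"
    unfolding eq f_def by (rule measure_finite_Union[OF fin sets disj fm])
  then show ?thesis by (simp add: sum.cartesian_product split_beta)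
qed

lemma G:
  assumes Q1: "Q1 \<subseteq> {..<h m}" and Q2: "Q2 \<subseteq> {..<h m}"
  shows "\<bar>(\<Sum>k<n. measure M (U m Q1 \<inter> (T ^^ k) ` U m Q2)) - real (card Q1 * card Q2) * S m n\<bar>
     \<le> real (card Q1 * card Q2) * (real (h m) * w m)"
proof -
  define B where "B = real (h m) * w m"
  have "(\<Sum>k<n. measure M (U m Q1 \<inter> (T ^^ k) ` U m Q2)) = (\<Sum>k<n. \<Sum>a\<in>Q1. \<Sum>b\<in>Q2. f m a b k)"
    using X_formula[OF Q1 Q2] by simp
  also have "\<dots> = (\<Sum>a\<in>Q1. \<Sum>k<n. \<Sum>b\<in>Q2. f m a b k)" by (rule sum.swap)
  also have "\<dots> = (\<Sum>a\<in>Q1. \<Sum>b\<in>Q2. \<Sum>k<n. f m a b k)" by (intro sum.cong refl sum.swap)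
  finally have e: "(\<Sum>k<n. measure M (U m Q1 \<inter> (T ^^ k) ` U m Q2)) - real (card Q1 * card Q2) * S m n
      = (\<Sum>a\<in>Q1. \<Sum>b\<in>Q2. (\<Sum>k<n. f m a b k) - S m n)"
    by (simp add: sum_subtractf sum_distrib_right)
  have "\<bar>\<Sum>a\<in>Q1. \<Sum>b\<in>Q2. (\<Sum>k<n. f m a b k) - S m n\<bar> \<le> (\<Sum>a\<in>Q1. \<bar>\<Sum>b\<in>Q2. (\<Sum>k<n. f m a b k) - S m n\<bar>)"
    by (rule sum_abs)
  also have "\<dots> \<le> (\<Sum>a\<in>Q1. \<Sum>b\<in>Q2. \<bar>(\<Sum>k<n. f m a b k) - S m n\<bar>)"
    by (intro sum_mono sum_abs)
  also have "\<dots> \<le> (\<Sum>a\<in>Q1. \<Sum>b\<in>Q2. B)"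
    unfolding B_def using Q1 Q2 by (intro sum_mono pair_bound) (auto simp del: lessThan_iff)
  also have "\<dots> = real (card Q1 * card Q2) * B" by simp
  finally show ?thesis unfolding e B_def .
qed


lemma count_pairs: "finite Q \<Longrightarrow> real (card Q) ^ 2 \<le> 2 * (\<Sum>a\<in>Q. \<Sum>b\<in>Q. if b \<le> a then 1 else 0 :: real)"
  for Q :: "nat set"
proof -
  assume fQ: "finite Q"
  have sw: "(\<Sum>a\<in>Q. \<Sum>b\<in>Q. if a \<le> b then 1 else 0 :: real) = (\<Sum>a\<in>Q. \<Sum>b\<in>Q. if b \<le> a then 1 else 0 :: real)"
    by (rule sum.swap)
  have "real (card Q) ^ 2 = (\<Sum>a\<in>Q. \<Sum>b\<in>Q. 1 :: real)" by (simp add: power2_eq_square)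
  also have "\<dots> \<le> (\<Sum>a\<in>Q. \<Sum>b\<in>Q. (if b \<le> a then 1 else 0) + (if a \<le> b then 1 else 0) :: real)"
    by (intro sum_mono) auto
  also have "\<dots> = 2 * (\<Sum>a\<in>Q. \<Sum>b\<in>Q. if b \<le> a then 1 else 0 :: real)"
    using sw by (simp add: sum.distrib)
  finally show ?thesis .
qed

lemma prod_ge: "2 ^ n \<le> real (\<Prod>i<n. r i)"
proof (induction n)
  case (Suc n)
  have "2 ^ Suc n = 2 * (2::real) ^ n" by simp
  also have "\<dots> \<le> real (r n) * real (\<Prod>i<n. r i)" using Suc r2[of n] by (intro mult_mono) auto
  finally show ?case by (simp add: mult.commute)
qed simp

definition "Y n = (\<Sum>k<n. measure M (L 0 0 \<inter> (T ^^ k) ` L 0 0))"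

lemma Y_mono: "n \<le> n' \<Longrightarrow> Y n \<le> Y n'"
  unfolding Y_def by (intro sum_mono2) auto

lemma L00_U: "\<exists>Q \<subseteq> {..<h m}. L 0 0 = U m Q"
  using refine[of 0 m 0] unfolding U_def by simp

lemma Y_lower: "\<mu>I * 2 ^ m / 2 \<le> Y (h m)"
proof -
  obtain Q where Q: "Q \<subseteq> {..<h m}" "L 0 0 = U m Q" using L00_U by blast
  have fQ: "finite Q" using Q finite_subset by blast
  have cw: "real (card Q) * w m = \<mu>I" using U_measure[OF Q(1)] Q(2) unfolding \<mu>I_def by simp
  have "Y (h m) = (\<Sum>k<h m. \<Sum>a\<in>Q. \<Sum>b\<in>Q. f m a b k)"
    unfolding Y_def Q(2)[symmetric] using X_formula[OF Q(1) Q(1)] Q(2) by simp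
  also have "\<dots> = (\<Sum>a\<in>Q. \<Sum>k<h m. \<Sum>b\<in>Q. f m a b k)" by (rule sum.swap)
  also have "\<dots> = (\<Sum>a\<in>Q. \<Sum>b\<in>Q. \<Sum>k<h m. f m a b k)" by (intro sum.cong refl sum.swap)
  finally have Ye: "Y (h m) = (\<Sum>a\<in>Q. \<Sum>b\<in>Q. \<Sum>k<h m. f m a b k)" .
  have "w m * (\<Sum>a\<in>Q. \<Sum>b\<in>Q. if b \<le> a then 1 else 0 :: real)
      = (\<Sum>a\<in>Q. \<Sum>b\<in>Q. if b \<le> a then w m else 0)"
    by (simp add: sum_distrib_left if_distrib cong: if_cong)
  also have "\<dots> \<le> (\<Sum>a\<in>Q. \<Sum>b\<in>Q. \<Sum>k<h m. f m a b k)"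
  proof (intro sum_mono)
    fix a b assume a: "a \<in> Q" and b: "b \<in> Q"
    have ah: "a < h m" and bh: "b < h m" using a b Q(1) by auto
    have nn: "0 \<le> (\<Sum>k<h m. f m a b k)" using f_bounds[OF ah bh] by (intro sum_nonneg) auto
    show "(if b \<le> a then w m else 0) \<le> (\<Sum>k<h m. f m a b k)"
    proof (cases "b \<le> a")
      case True
      have "f m a b (a - b) = c m 0" using f_c[OF ah bh] True by simp
      also have "\<dots> = w m" unfolding c_def using Lmeasure h_pos by simp
      finally have "w m = f m a b (a - b)" by simp
      also have "\<dots> \<le> (\<Sum>k<h m. f m a b k)"
        using ah f_bounds[OF ah bh] by (intro member_le_sum) auto
      finally show ?thesis using True by simp
    qed (use nn in simp)
  qed
  finally have "w m * (\<Sum>a\<in>Q. \<Sum>b\<in>Q. if b \<le> a then 1 else 0 :: real) \<le> Y (h m)"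
    using Ye by simp
  moreover have "w m * real (card Q) ^ 2 \<le> 2 * (w m * (\<Sum>a\<in>Q. \<Sum>b\<in>Q. if b \<le> a then 1 else 0 :: real))"
    using mult_left_mono[OF count_pairs[OF fQ], of "w m"] w_pos[of m] by simp
  moreover have "w m * real (card Q) ^ 2 = \<mu>I * real (card Q)" using cw by (simp add: power2_eq_square algebra_simps)
  moreover have "real (card Q) = real (\<Prod>i<m. r i)"
  proof -
    have "real (card Q) * \<mu>I = real (\<Prod>i<m. r i) * \<mu>I"
      using cw prod_pos[of m] unfolding w_def by (simp add: divide_eq_eq mult.commute del: of_nat_prod)
    then show ?thesis using muI_pos by simp
  qed
  moreover have "\<mu>I * 2 ^ m \<le> \<mu>I * real (card Q)"
    using prod_ge muI_pos calculation by (intro mult_left_mono) auto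
  ultimately show ?thesis by linarith
qed

lemma Y_at_top: "filterlim Y at_top sequentially"
proof (subst filterlim_at_top, intro allI)
  fix Z :: real
  obtain m where "Z * 2 / \<mu>I < 2 ^ m" using real_arch_pow[of 2 "Z * 2 / \<mu>I"] by auto
  then have "Z \<le> \<mu>I * 2 ^ m / 2" using muI_pos by (simp add: field_simps)
  then have "\<forall>n\<ge>h m. Z \<le> Y n" using Y_lower[of m] Y_mono by (meson order_trans)
  then show "eventually (\<lambda>n. Z \<le> Y n) sequentially" unfolding eventually_sequentially by blast
qed

end

theorem mainTheorem2:
  fixes M :: "'a measure" and T :: "'a \<Rightarrow> 'a"
    and r :: "nat \<Rightarrow> nat" and s :: "nat \<Rightarrow> nat \<Rightarrow> nat" and L :: "nat \<Rightarrow> nat \<Rightarrow> 'a set"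
    and A B :: "'a set"
  assumes "standard_borel M" and "sigma_finite_measure M" and "nonatomic_measure M"
    and "cutting_stacking M T r s L"
    and "finite_union_of_levels (col_height r s) L A" and "A \<subseteq> L 0 0"
    and "finite_union_of_levels (col_height r s) L B" and "B \<subseteq> L 0 0"
  shows "(\<lambda>n. (\<Sum>k<n. measure M (A \<inter> (T ^^ k) ` B)) / a_seq M T (L 0 0) n)
           \<longlonglongrightarrow> measure M A * measure M B"
proof -
  interpret CS M T r s L using assms(4) by unfold_locales
  obtain FA where FA: "finite FA" "\<forall>p\<in>FA. snd p < h (fst p)" "A = (\<Union>p\<in>FA. L (fst p) (snd p))"
    using assms(5) unfolding finite_union_of_levels_def by blast
  obtain FB where FB: "finite FB" "\<forall>p\<in>FB. snd p < h (fst p)" "B = (\<Union>p\<in>FB. L (fst p) (snd p))"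
    using assms(7) unfolding finite_union_of_levels_def by blast
  define m where "m = (\<Sum>p\<in>FA \<union> FB. fst p)"
  have fm: "fst p \<le> m" if "p \<in> FA \<union> FB" for p
    unfolding m_def using that FA(1) FB(1) by (intro member_le_sum) auto
  obtain QA where QA: "QA \<subseteq> {..<h m}" "A = U m QA"
    using union_refine[of FA m] FA fm unfolding U_def by auto
  obtain QB where QB: "QB \<subseteq> {..<h m}" "B = U m QB"
    using union_refine[of FB m] FB fm unfolding U_def by auto
  obtain QI where QI: "QI \<subseteq> {..<h m}" "L 0 0 = U m QI" using L00_U by blast
  define \<alpha> where "\<alpha> = real (card QA * card QB)"
  define \<beta> where "\<beta> = real (card QI * card QI)"
  define H where "H = real (h m) * w m"
  define X where "X n = (\<Sum>k<n. measure M (A \<inter> (T ^^ k) ` B))" for n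
  have Xb: "\<bar>X n - \<alpha> * S m n\<bar> \<le> \<alpha> * H" for n
    unfolding X_def \<alpha>_def H_def QA(2) QB(2) by (rule G[OF QA(1) QB(1)])
  have Yb: "\<bar>Y n - \<beta> * S m n\<bar> \<le> \<beta> * H" for n
    unfolding Y_def \<beta>_def H_def QI(2) by (rule G[OF QI(1) QI(1)])
  have cI: "real (card QI) * w m = \<mu>I" using U_measure[OF QI(1)] QI(2) unfolding \<mu>I_def by simp
  have "card QI \<noteq> 0"
  proof
    assume "card QI = 0"
    then show False using cI muI_pos by simp
  qed
  then have cIpos: "0 < real (card QI)" by simp
  have bpos: "0 < \<beta>" unfolding \<beta>_def using cIpos by simp
  have Hnn: "0 \<le> H" unfolding H_def using w_pos[of m] by simp
  have anng: "0 \<le> \<alpha>" unfolding \<alpha>_def by simp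
  have aseq: "a_seq M T (L 0 0) n = Y n / \<mu>I ^ 2" for n
    unfolding a_seq_def u_seq_def Y_def \<mu>I_def by (simp add: sum_divide_distrib)
  have target: "measure M A * measure M B = \<mu>I ^ 2 * (\<alpha> / \<beta>)"
  proof -
    have "measure M A * measure M B = \<alpha> * w m ^ 2"
      unfolding QA(2) QB(2) U_measure[OF QA(1)] U_measure[OF QB(1)] \<alpha>_def
      by (simp add: power2_eq_square)
    also have "\<dots> = \<mu>I ^ 2 * (\<alpha> / \<beta>)"
      unfolding cI[symmetric] \<beta>_def using cIpos by (simp add: field_simps power2_eq_square)
    finally show ?thesis .
  qed
  define D where "D n = X n - (\<alpha> / \<beta>) * Y n" for n
  define C where "C = 2 * \<alpha> * H"
  have Db: "\<bar>D n\<bar> \<le> C" for n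
  proof -
    have "\<bar>(\<alpha> / \<beta>) * (Y n - \<beta> * S m n)\<bar> \<le> (\<alpha> / \<beta>) * (\<beta> * H)"
    proof -
      have ab: "0 \<le> \<alpha> / \<beta>" using anng bpos by simp
      have "\<bar>(\<alpha> / \<beta>) * (Y n - \<beta> * S m n)\<bar> = (\<alpha> / \<beta>) * \<bar>Y n - \<beta> * S m n\<bar>"
        by (simp only: abs_mult abs_of_nonneg[OF ab])
      also have "\<dots> \<le> (\<alpha> / \<beta>) * (\<beta> * H)" by (rule mult_left_mono[OF Yb ab])
      finally show ?thesis .
    qed
    also have "\<dots> = \<alpha> * H" using bpos by simp
    finally have "\<bar>(\<alpha> / \<beta>) * Y n - \<alpha> * S m n\<bar> \<le> \<alpha> * H"
      using bpos by (simp add: algebra_simps)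
    then show ?thesis unfolding D_def C_def using Xb[of n] by linarith
  qed
  have Yinf: "LIM n sequentially. Y n :> at_infinity"
    by (rule filterlim_at_top_imp_at_infinity[OF Y_at_top])
  have evpos: "eventually (\<lambda>n. 1 \<le> Y n) sequentially"
    using Y_at_top unfolding filterlim_at_top by blast
  have "(\<lambda>n. C / Y n) \<longlonglongrightarrow> 0" by (rule tendsto_divide_0[OF tendsto_const Yinf])
  then have D0: "(\<lambda>n. D n / Y n) \<longlonglongrightarrow> 0"
  proof (rule Lim_null_comparison[rotated])
    show "eventually (\<lambda>n. norm (D n / Y n) \<le> C / Y n) sequentially"
      using evpos
    proof (rule eventually_mono)
      fix n assume "1 \<le> Y n"
      then show "norm (D n / Y n) \<le> C / Y n" using Db[of n]
        by (simp add: abs_divide divide_right_mono)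
    qed
  qed
  have lim: "(\<lambda>n. \<mu>I ^ 2 * (\<alpha> / \<beta> + D n / Y n)) \<longlonglongrightarrow> \<mu>I ^ 2 * (\<alpha> / \<beta>)"
  proof -
    have "(\<lambda>n. \<mu>I ^ 2 * (\<alpha> / \<beta> + D n / Y n)) \<longlonglongrightarrow> \<mu>I ^ 2 * (\<alpha> / \<beta> + 0)"
      by (intro tendsto_mult tendsto_add tendsto_const D0)
    then show ?thesis by simp
  qed
  have "eventually (\<lambda>n. \<mu>I ^ 2 * (\<alpha> / \<beta> + D n / Y n) =
          (\<Sum>k<n. measure M (A \<inter> (T ^^ k) ` B)) / a_seq M T (L 0 0) n) sequentially"
    using evpos
  proof (rule eventually_mono)
    fix n assume "1 \<le> Y n"
    then show "\<mu>I ^ 2 * (\<alpha> / \<beta> + D n / Y n) = (\<Sum>k<n. measure M (A \<inter> (T ^^ k) ` B)) / a_seq M T (L 0 0) n"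
      unfolding aseq X_def[symmetric] D_def using muI_pos bpos by (simp add: field_simps)
  qed
  from Lim_transform_eventually[OF lim this] show ?thesis unfolding target .
qed

end
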